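(* Let $\alpha>0$. Suppose $f_1,\dots,f_n:\mathbb{R}^d\to\mathbb{R}$ are convex and $L$-smooth, $r:\mathbb{R}^d\to\mathbb{R}\cup\{\infty\}$ is proper, closed and convex, and $A,B\in\mathbb{R}^{n\times n}$ satisfy the matrix assumptions below. If a point $(\bm{x}^\star,\bm{w}^\star,\bm{u}^\star)\in(\mathbb{R}^{nd})^3$ satisfies $$\bm{w}^\star=\bm{x}^\star-\alpha\nabla F(\bm{x}^\star),\qquad \bm{x}^\star=\mathrm{prox}_{\alpha R}\big(\bm{A}(\bm{w}^\star-\sqrt{\bm{B}}\bm{u}^\star)\big),\qquad \bm{0}=\sqrt{\bm{B}}\big(\bm{w}^\star-\sqrt{\bm{B}}\bm{u}^\star\big),$$ then $\bm{x}^\star=\bm{1}_n\otimes x^\star$ for some $x^\star\in\mathbb{R}^d$, and $x^\star$ solves $\min_{x\in\mathbb{R}^d}\frac1n\sum_{i=1}^n\big[f_i(x)+r(x)\big]$.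
   Context: Notation: for $\bm{x}=\mathrm{col}\{x_1,\dots,x_n\}\in\mathbb{R}^{nd}$ with $x_i\in\mathbb{R}^d$, $F(\bm{x})=\sum_{i=1}^n f_i(x_i)$ and $R(\bm{x})=\sum_{i=1}^n r(x_i)$. For $\alpha>0$, $\mathrm{prox}_{\alpha r}(x)=\arg\min_{s}\{r(s)+\frac{1}{2\alpha}\|s-x\|^2\}$, and $\mathrm{prox}_{\alpha R}$ acts blockwise. $W\in\mathbb{R}^{n\times n}$ is a mixing matrix of an undirected connected graph on $n$ nodes: $W=W^{\sf T}$, $W_{ij}>0$ if $(i,j)$ is an edge, $W_{ij}=0$ if $i\neq j$ and $(i,j)$ is not an edge, and $W\bm{1}=\bm{1}$. Matrices $A,B$ are polynomials in $W$ satisfying: $A^{\sf T}=A$, $A\bm{1}=\bm{1}$, $B\succeq 0$, $\mathrm{null}(B)=\mathrm{span}(\bm{1})$, and $I-A^2-B\succeq 0$. Set $\bm{A}=A\otimes I_d$, $\bm{B}=B\otimes I_d$, and $\sqrt{\bm{B}}=\sqrt{B}\otimes I_d$ where $\sqrt B$ is the positive semidefinite square root of $B$. *)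

theory Defs
  imports "HOL-Analysis.Analysis"
begin

text \<open>Stacked vectors in R^(nd) are represented as elements of real^'d^'n:
  block i (a vector in R^d) is x $ i.  n x n matrices are real^'n^'n.\<close>

text \<open>Action of the Kronecker product M \<otimes> I_d on a stacked vector.\<close>
definition kron_app :: "real^'n^'n \<Rightarrow> real^'d^'n \<Rightarrow> real^'d^'n" where
  "kron_app M x = (\<chi> i. \<Sum>j\<in>UNIV. (M $ i $ j) *\<^sub>R (x $ j))"

definition ones :: "real^'n" where "ones = (\<chi> i. 1)"

definition psd :: "real^'n^'n \<Rightarrow> bool" where
  "psd M \<longleftrightarrow> transpose M = M \<and> (\<forall>x. 0 \<le> x \<bullet> (M *v x))"

primrec mpow :: "real^'n^'n \<Rightarrow> nat \<Rightarrow> real^'n^'n" where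
  "mpow W 0 = mat 1"
| "mpow W (Suc k) = W ** mpow W k"

definition poly_in :: "real^'n^'n \<Rightarrow> real^'n^'n \<Rightarrow> bool" where
  "poly_in M W \<longleftrightarrow> (\<exists>(c::nat \<Rightarrow> real) N. M = (\<Sum>k<N. c k *\<^sub>R mpow W k))"

definition mixing_matrix :: "('n \<Rightarrow> 'n \<Rightarrow> bool) \<Rightarrow> real^'n^'n \<Rightarrow> bool" where
  "mixing_matrix E W \<longleftrightarrow>
     (\<forall>i j. E i j \<longleftrightarrow> E j i) \<and> (\<forall>i. \<not> E i i) \<and>
     (\<forall>i j. E\<^sup>*\<^sup>* i j) \<and>
     transpose W = W \<and>
     (\<forall>i j. E i j \<longrightarrow> W $ i $ j > 0) \<and>
     (\<forall>i j. i \<noteq> j \<and> \<not> E i j \<longrightarrow> W $ i $ j = 0) \<and>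
     W *v ones = ones"

definition proper_fun :: "('a \<Rightarrow> ereal) \<Rightarrow> bool" where
  "proper_fun r \<longleftrightarrow> (\<forall>x. r x \<noteq> -\<infinity>) \<and> (\<exists>x. r x \<noteq> \<infinity>)"

definition closed_fun :: "('a::topological_space \<Rightarrow> ereal) \<Rightarrow> bool" where
  "closed_fun r \<longleftrightarrow> closed {(x, t::real). r x \<le> ereal t}"

definition convex_fun :: "('a::real_vector \<Rightarrow> ereal) \<Rightarrow> bool" where
  "convex_fun r \<longleftrightarrow> (\<forall>x y t. 0 \<le> t \<and> t \<le> 1 \<longrightarrow>
      r ((1 - t) *\<^sub>R x + t *\<^sub>R y) \<le> ereal (1 - t) * r x + ereal t * r y)"

definition prox :: "real \<Rightarrow> ('a::real_normed_vector \<Rightarrow> ereal) \<Rightarrow> 'a \<Rightarrow> 'a" where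
  "prox \<alpha> r v = (THE p. \<forall>s. r p + ereal (norm (p - v)^2 / (2 * \<alpha>))
                              \<le> r s + ereal (norm (s - v)^2 / (2 * \<alpha>)))"

text \<open>Blockwise prox of R(x) = \<Sum>_i r(x_i).\<close>
definition proxR :: "real \<Rightarrow> (real^'d \<Rightarrow> ereal) \<Rightarrow> real^'d^'n \<Rightarrow> real^'d^'n" where
  "proxR \<alpha> r x = (\<chi> i. prox \<alpha> r (x $ i))"

definition gradF :: "('n \<Rightarrow> real^'d \<Rightarrow> real^'d) \<Rightarrow> real^'d^'n \<Rightarrow> real^'d^'n" where
  "gradF g x = (\<chi> i. g i (x $ i))"

end

theory Submission
  imports Defs
begin

lemma convex_fun_ineq:
  fixes r :: "'a::real_vector \<Rightarrow> ereal"
  assumes cv: "convex_fun r" and "r x \<le> ereal t" "r y \<le> ereal s" "0 \<le> u" "u \<le> 1"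
  shows "r ((1 - u) *\<^sub>R x + u *\<^sub>R y) \<le> ereal ((1 - u) * t + u * s)"
proof -
  have "r ((1 - u) *\<^sub>R x + u *\<^sub>R y) \<le> ereal (1 - u) * r x + ereal u * r y"
    using cv assms unfolding convex_fun_def by blast
  also have "\<dots> \<le> ereal (1 - u) * ereal t + ereal u * ereal s"
    using assms by (intro add_mono ereal_mult_left_mono) auto
  also have "\<dots> = ereal ((1 - u) * t + u * s)" by simp
  finally show ?thesis .
qed

lemma affine_minorant:
  fixes r :: "'a::euclidean_space \<Rightarrow> ereal"
  assumes pr: "proper_fun r" and cl: "closed_fun r" and cv: "convex_fun r"
  shows "\<exists>w c. \<forall>x. ereal (c + w \<bullet> x) \<le> r x"
proof -
  obtain x1 where x1: "r x1 \<noteq> \<infinity>" using pr unfolding proper_fun_def by auto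
  have "r x1 \<noteq> -\<infinity>" using pr unfolding proper_fun_def by auto
  with x1 obtain r1 where r1: "r x1 = ereal r1" by (cases "r x1") auto
  define E where "E = {(x, t::real). r x \<le> ereal t}"
  have clE: "closed E" using cl unfolding closed_fun_def E_def .
  have cvE: "convex E"
    unfolding convex_alt
  proof (intro ballI allI impI)
    fix p q :: "'a \<times> real" and u :: real
    assume p: "p \<in> E" and q: "q \<in> E" and u: "0 \<le> u \<and> u \<le> 1"
    obtain x t where pxt: "p = (x, t)" by (cases p)
    obtain y s where qys: "q = (y, s)" by (cases q)
    have "r ((1 - u) *\<^sub>R x + u *\<^sub>R y) \<le> ereal ((1 - u) * t + u * s)"
      using p q u pxt qys by (intro convex_fun_ineq[OF cv]) (auto simp: E_def)
    then show "(1 - u) *\<^sub>R p + u *\<^sub>R q \<in> E" using pxt qys by (simp add: E_def)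
  qed
  have "(x1, r1 - 1) \<notin> E" using r1 by (simp add: E_def)
  from separating_hyperplane_closed_point[OF cvE clE this]
  obtain a b where ab: "a \<bullet> (x1, r1 - 1) < b" "\<forall>p\<in>E. a \<bullet> p > b" by blast
  obtain w0 \<beta> where a: "a = (w0, \<beta>)" by (cases a)
  have "(x1, r1) \<in> E" using r1 by (simp add: E_def)
  then have h1: "w0 \<bullet> x1 + \<beta> * r1 > b" using ab a by auto
  have h0: "w0 \<bullet> x1 + \<beta> * (r1 - 1) < b" using ab a by auto
  have bpos: "\<beta> > 0" using h0 h1 by (simp add: algebra_simps)
  show ?thesis
  proof (intro exI allI)
    fix x
    show "ereal (b / \<beta> + (- (1/\<beta>) *\<^sub>R w0) \<bullet> x) \<le> r x"
    proof (cases "r x")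
      case (real rx)
      then have "(x, rx) \<in> E" by (simp add: E_def)
      then have "w0 \<bullet> x + \<beta> * rx > b" using ab a by auto
      then have "b / \<beta> - (w0 \<bullet> x) / \<beta> \<le> rx" using bpos
        by (simp add: field_simps)
      then show ?thesis using real by (simp add: divide_inverse mult.commute)
    next
      case PInf then show ?thesis by simp
    next
      case MInf then show ?thesis using pr unfolding proper_fun_def by auto
    qed
  qed
qed


lemma quad_bound:
  fixes y a b :: real
  assumes "y \<ge> 0" "a \<ge> 0" "b \<ge> 0" "y^2 \<le> a + b * y"
  shows "y \<le> max 1 (a + b)"
proof (cases "y \<le> 1")
  case False
  have "a * 1 \<le> a * y" using False assms by (intro mult_left_mono) auto
  then have "y * y \<le> (a + b) * y" using assms by (simp add: power2_eq_square algebra_simps)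
  then show ?thesis using False by simp
qed simp

lemma aux1: fixes n1 n2 s d :: real shows "n1 + n2 \<le> 2 * (s/4) \<Longrightarrow> d = 2*n1 + 2*n2 - s \<Longrightarrow> d \<le> 0"
  by (simp add: field_simps)
lemma aux2: fixes a1 a2 q1 q2 qz :: real shows "a1 + q1 \<le> a2 + q2 \<Longrightarrow> a2 + q2 \<le> a1 + q1 \<Longrightarrow> a1 + q1 \<le> (a1 + a2) / 2 + qz \<Longrightarrow> q1 + q2 \<le> 2 * qz"
  by (simp add: field_simps)

lemma prox_ex1:
  fixes r :: "'a::euclidean_space \<Rightarrow> ereal"
  assumes ap: "\<alpha> > 0" and pr: "proper_fun r" and cl: "closed_fun r" and cv: "convex_fun r"
  shows "\<exists>!p. \<forall>s. r p + ereal (norm (p - v)^2 / (2 * \<alpha>)) \<le> r s + ereal (norm (s - v)^2 / (2 * \<alpha>))"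
proof -
  define q where "q = (\<lambda>x. norm (x - v)^2 / (2 * \<alpha>))"
  obtain x1 where x1: "r x1 \<noteq> \<infinity>" using pr unfolding proper_fun_def by auto
  have "r x1 \<noteq> -\<infinity>" using pr unfolding proper_fun_def by auto
  with x1 obtain r1 where r1: "r x1 = ereal r1" by (cases "r x1") auto
  obtain w c where wc: "\<And>x. ereal (c + w \<bullet> x) \<le> r x" using affine_minorant[OF pr cl cv] by blast
  define c1 where "c1 = r1 + q x1"
  define K where "K = {(x, t::real). r x \<le> ereal t} \<inter> {(x, t). t + q x \<le> c1}"
  have clK: "closed K"
    unfolding K_def
  proof (rule closed_Int)
    show "closed {(x, t::real). r x \<le> ereal t}" using cl unfolding closed_fun_def .
    have "{(x, t). t + q x \<le> c1} = {p. snd p + q (fst p) \<le> c1}" by auto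
    also have "closed \<dots>" unfolding q_def using ap by (intro closed_Collect_le continuous_intros) auto
    finally show "closed {(x, t). t + q x \<le> c1}" .
  qed
  define a0 where "a0 = 2 * \<alpha> * (\<bar>c1 - c\<bar> + norm w * norm v)"
  define b0 where "b0 = 2 * \<alpha> * norm w"
  define R where "R = max 1 (a0 + b0)"
  have Kb: "norm (x - v) \<le> R \<and> c - norm w * (norm v + R) \<le> t \<and> t \<le> c1" if "(x, t) \<in> K" for x t
  proof -
    have "ereal (c + w \<bullet> x) \<le> ereal t" using wc[of x] that unfolding K_def by (blast intro: order_trans)
    then have 1: "c + w \<bullet> x \<le> t" by simp
    have 2: "t + q x \<le> c1" using that by (auto simp: K_def)
    have qx: "q x \<le> \<bar>c1 - c\<bar> + norm w * norm v + norm w * norm (x - v)"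
    proof -
      have "w \<bullet> x = w \<bullet> v + w \<bullet> (x - v)" by (simp add: inner_diff_right)
      moreover have "- (w \<bullet> v) \<le> norm w * norm v" using Cauchy_Schwarz_ineq2[of w v] by simp
      moreover have "- (w \<bullet> (x - v)) \<le> norm w * norm (x - v)" using Cauchy_Schwarz_ineq2[of w "x - v"] by simp
      ultimately show ?thesis using 1 2 by linarith
    qed
    have "norm (x - v)^2 \<le> a0 + b0 * norm (x - v)"
      using qx ap unfolding q_def a0_def b0_def by (simp add: field_simps)
    then have nx: "norm (x - v) \<le> R" unfolding R_def
      by (intro quad_bound) (auto simp: a0_def b0_def ap less_imp_le)
    have "norm x \<le> norm v + R" using nx norm_triangle_sub[of x v] by (smt (verit) norm_minus_commute norm_triangle_ineq2)
    then have "norm w * norm x \<le> norm w * (norm v + R)" by (simp add: mult_left_mono)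
    moreover have "- (w \<bullet> x) \<le> norm w * norm x" using Cauchy_Schwarz_ineq2[of w x] by simp
    moreover have "0 \<le> q x" unfolding q_def using ap by simp
    ultimately show ?thesis using nx 1 2 by linarith
  qed
  have "K \<subseteq> cball v R \<times> {c - norm w * (norm v + R) .. c1}"
    using Kb by (auto simp: dist_norm norm_minus_commute)
  moreover have "bounded (cball v R \<times> {c - norm w * (norm v + R) .. c1})"
    by (intro bounded_Times bounded_cball bounded_closed_interval)
  ultimately have "bounded K" using bounded_subset by blast
  with clK have cK: "compact K" by (simp add: compact_eq_bounded_closed)
  have x1K: "(x1, r1) \<in> K" using r1 by (simp add: K_def c1_def)
  have "continuous_on K (\<lambda>p. snd p + q (fst p))" unfolding q_def using ap by (intro continuous_intros) auto
  from continuous_attains_inf[OF cK _ this] x1K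
  obtain pt where ptK: "pt \<in> K" and ptmin: "\<And>y. y \<in> K \<Longrightarrow> snd pt + q (fst pt) \<le> snd y + q (fst y)"
    by blast
  obtain p tp where pt: "pt = (p, tp)" by (cases pt)
  have ex: "\<forall>s. r p + ereal (q p) \<le> r s + ereal (q s)"
  proof
    fix s
    have "r p + ereal (q p) \<le> ereal tp + ereal (q p)" using ptK pt by (intro add_right_mono) (auto simp: K_def)
    also have "\<dots> \<le> r s + ereal (q s)"
    proof (cases "r s")
      case (real rs)
      show ?thesis
      proof (cases "rs + q s \<le> c1")
        case True
        then have "(s, rs) \<in> K" using real by (simp add: K_def)
        from ptmin[OF this] show ?thesis using pt real by simp
      next
        case False
        then show ?thesis using ptK pt real by (simp add: K_def)
      qed
    next
      case PInf then show ?thesis by simp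
    next
      case MInf then show ?thesis using pr unfolding proper_fun_def by auto
    qed
    finally show "r p + ereal (q p) \<le> r s + ereal (q s)" .
  qed
  have uniq: "p1 = p2" if m1: "\<forall>s. r p1 + ereal (q p1) \<le> r s + ereal (q s)"
    and m2: "\<forall>s. r p2 + ereal (q p2) \<le> r s + ereal (q s)" for p1 p2
  proof -
    have fin: "\<exists>a. r p' = ereal a" if m: "\<forall>s. r p' + ereal (q p') \<le> r s + ereal (q s)" for p'
    proof -
      have "r p' + ereal (q p') \<le> ereal (r1 + q x1)" using m[rule_format, of x1] r1 by simp
      then have "r p' \<noteq> \<infinity>" by auto
      moreover have "r p' \<noteq> -\<infinity>" using pr unfolding proper_fun_def by auto
      ultimately show ?thesis by (cases "r p'") auto
    qed
    obtain a1 where a1: "r p1 = ereal a1" using fin[OF m1] by blast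
    obtain a2 where a2: "r p2 = ereal a2" using fin[OF m2] by blast
    have e12: "a1 + q p1 \<le> a2 + q p2" using m1[rule_format, of p2] a1 a2 by simp
    have e21: "a2 + q p2 \<le> a1 + q p1" using m2[rule_format, of p1] a1 a2 by simp
    define z where "z = (1 - 1/2) *\<^sub>R p1 + (1/2::real) *\<^sub>R p2"
    have rz: "r z \<le> ereal ((1 - 1/2) * a1 + (1/2) * a2)"
      unfolding z_def using a1 a2 by (intro convex_fun_ineq[OF cv]) auto
    have "r p1 + ereal (q p1) \<le> r z + ereal (q z)" using m1 by blast
    also have "\<dots> \<le> ereal ((1 - 1/2) * a1 + (1/2) * a2) + ereal (q z)" using rz by (rule add_right_mono)
    finally have "a1 + q p1 \<le> (a1 + a2) / 2 + q z" using a1 by (simp add: add_divide_distrib)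
    with e12 e21 have "q p1 + q p2 \<le> 2 * q z" by (rule aux2)
    then have ineq: "norm (p1 - v)^2 + norm (p2 - v)^2 \<le> 2 * norm (z - v)^2"
    proof -
      have "(q p1 + q p2) * (2 * \<alpha>) \<le> (2 * q z) * (2 * \<alpha>)"
        using \<open>q p1 + q p2 \<le> 2 * q z\<close> ap by (intro mult_right_mono) auto
      then show ?thesis using ap unfolding q_def by (simp add: algebra_simps)
    qed
    define P1 where "P1 = p1 - v"
    define P2 where "P2 = p2 - v"
    have zv: "z - v = (1/2) *\<^sub>R (P1 + P2)" 
    proof -
      have hv: "v = (1/2::real) *\<^sub>R v + (1/2::real) *\<^sub>R v"
        by (metis scaleR_add_left field_sum_of_halves scaleR_one)
      have h12: "(1 - 1/2::real) = 1/2" by simp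
      have "z - v = (1/2::real) *\<^sub>R p1 + (1/2::real) *\<^sub>R p2 - ((1/2::real) *\<^sub>R v + (1/2::real) *\<^sub>R v)"
        unfolding z_def by (subst hv) (simp only: h12)
      also have "\<dots> = (1/2) *\<^sub>R (P1 + P2)" unfolding P1_def P2_def by (simp add: scaleR_diff_right scaleR_add_right)
      finally show ?thesis .
    qed
    have "norm (P1 - P2)^2 \<le> 0"
      using ineq unfolding zv P1_def[symmetric] P2_def[symmetric]
    proof -
      have e1: "norm (P1 - P2)^2 = 2 * norm P1^2 + 2 * norm P2^2 - norm (P1 + P2)^2"
        using dot_norm[of P1 P2] dot_norm_neg[of P1 P2] by (simp add: field_simps)
      have e2: "norm ((1/2::real) *\<^sub>R (P1 + P2))^2 = norm (P1 + P2)^2 / 4"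
        by (simp add: power_mult_distrib power_divide)
      have i2: "norm P1^2 + norm P2^2 \<le> 2 * (norm (P1+P2)^2/4)"
        using ineq unfolding zv P1_def[symmetric] P2_def[symmetric] e2 .
      show ?thesis by (rule aux1[OF i2 e1])
    qed
    then have "P1 = P2" by simp
    then show ?thesis unfolding P1_def P2_def by simp
  qed
  show ?thesis
  proof (rule ex1I[of _ p])
    show "\<forall>s. r p + ereal (norm (p - v)^2 / (2 * \<alpha>)) \<le> r s + ereal (norm (s - v)^2 / (2 * \<alpha>))"
      using ex by (simp add: q_def)
    fix p' assume "\<forall>s. r p' + ereal (norm (p' - v)^2 / (2 * \<alpha>)) \<le> r s + ereal (norm (s - v)^2 / (2 * \<alpha>))"
    then have "\<forall>s. r p' + ereal (q p') \<le> r s + ereal (q s)" by (simp add: q_def)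
    then show "p' = p" using uniq ex by blast
  qed
qed


lemma lim0:
  fixes X H :: real
  assumes H: "H \<ge> 0" and all: "\<And>t. 0 < t \<Longrightarrow> t \<le> 1 \<Longrightarrow> 0 \<le> X + t * H"
  shows "0 \<le> X"
proof (rule ccontr)
  assume "\<not> 0 \<le> X"
  then have X: "X < 0" by simp
  define t where "t = min 1 (- X / (H + 1))"
  have "0 < - X / (H + 1)" using X H by (intro divide_pos_pos) auto
  then have t0: "0 < t" by (simp add: t_def)
  have t1: "t \<le> 1" by (simp add: t_def)
  have "t * H \<le> (- X / (H + 1)) * H" using H by (intro mult_right_mono) (auto simp: t_def)
  also have "\<dots> < - X"
  proof -
    have "(- X / (H + 1)) * H = - X * (H / (H + 1))" by simp
    also have "\<dots> < - X * 1" using X H by (intro mult_strict_left_mono) auto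
    finally show ?thesis by simp
  qed
  finally have "X + t * H < 0" by simp
  with all[OF t0 t1] show False by simp
qed

lemma aux3: fixes a b t al dd dh hh :: real assumes ap: "al > 0"
  and i: "a + dd/(2*al) \<le> (1-t)*a + t*b + (dd + 2*t*dh + t*t*hh)/(2*al)"
  shows "0 \<le> t*(2*al*(b-a) + 2*dh + t*hh)"
proof -
  have "(a + dd/(2*al))*(2*al) \<le> ((1-t)*a + t*b + (dd + 2*t*dh + t*t*hh)/(2*al))*(2*al)"
    using i ap by (intro mult_right_mono) auto
  also have "((1-t)*a + t*b + (dd + 2*t*dh + t*t*hh)/(2*al))*(2*al) = ((1-t)*a + t*b)*(2*al) + (dd + 2*t*dh + t*t*hh)"
    using ap by (simp add: field_simps)
  also have "(a + dd/(2*al))*(2*al) = a * (2*al) + dd" using ap by (simp add: field_simps)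
  finally show ?thesis by (simp add: algebra_simps)
qed

lemma zv: fixes p y v :: "'a::euclidean_space" and t :: real
  shows "(1 - t) *\<^sub>R p + t *\<^sub>R y - v = (p - v) + t *\<^sub>R (y - p)"
  by (simp add: scaleR_diff_left scaleR_diff_right)
lemma nz: fixes d h :: "'a::euclidean_space" and t :: real
  shows "norm (d + t *\<^sub>R h)^2 = d \<bullet> d + 2 * t * (d \<bullet> h) + t * t * (h \<bullet> h)"
  unfolding power2_norm_eq_inner by (simp add: inner_add_left inner_add_right inner_commute[of h d] power2_eq_square distrib_left mult.assoc)

lemma prox_opt:
  fixes r :: "'a::euclidean_space \<Rightarrow> ereal"
  assumes ap: "\<alpha> > 0" and cv: "convex_fun r"
    and min: "\<forall>s. r p + ereal (norm (p - v)^2 / (2 * \<alpha>)) \<le> r s + ereal (norm (s - v)^2 / (2 * \<alpha>))"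
    and rp: "r p = ereal a" and ry: "r y = ereal b"
  shows "0 \<le> 2 * \<alpha> * (b - a) + 2 * ((p - v) \<bullet> (y - p))"
proof -
  define d where "d = p - v"
  define h where "h = y - p"
  have key: "0 \<le> 2 * \<alpha> * (b - a) + 2 * (d \<bullet> h) + t * (h \<bullet> h)" if t: "0 < t" "t \<le> 1" for t
  proof -
    define z where "z = (1 - t) *\<^sub>R p + t *\<^sub>R y"
    have rz: "r z \<le> ereal ((1 - t) * a + t * b)"
      unfolding z_def using t rp ry by (intro convex_fun_ineq[OF cv]) auto
    have zv: "z - v = d + t *\<^sub>R h" unfolding z_def d_def h_def by (rule zv)
    have nz: "norm (z - v)^2 = d \<bullet> d + 2 * t * (d \<bullet> h) + t * t * (h \<bullet> h)"
      unfolding zv by (rule nz)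
    have "r p + ereal (norm (p - v)^2 / (2 * \<alpha>)) \<le> r z + ereal (norm (z - v)^2 / (2 * \<alpha>))"
      using min[rule_format, of z] .
    also have "\<dots> \<le> ereal ((1 - t) * a + t * b) + ereal (norm (z - v)^2 / (2 * \<alpha>))"
      using rz by (rule add_right_mono)
    finally have "a + norm (p - v)^2 / (2 * \<alpha>) \<le> (1 - t) * a + t * b + norm (z - v)^2 / (2 * \<alpha>)"
      using rp by simp
    moreover have np: "norm (p - v)^2 = d \<bullet> d" by (simp add: d_def power2_norm_eq_inner)
    ultimately have i1: "a + (d \<bullet> d) / (2 * \<alpha>) \<le> (1 - t) * a + t * b + (d \<bullet> d + 2 * t * (d \<bullet> h) + t * t * (h \<bullet> h)) / (2 * \<alpha>)"
      unfolding nz by simp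
    have "0 \<le> t * (2 * \<alpha> * (b - a) + 2 * (d \<bullet> h) + t * (h \<bullet> h))"
      by (rule aux3[OF ap i1])
    then show ?thesis using t by (simp add: zero_le_mult_iff)
  qed
  have "0 \<le> 2 * \<alpha> * (b - a) + 2 * (d \<bullet> h)"
    by (rule lim0[of "h \<bullet> h", OF inner_ge_zero key])
  then show ?thesis unfolding d_def h_def .
qed


lemma aux4: fixes al n a b I J :: real assumes ap: "al > 0" and np: "n > 0"
  and po: "0 \<le> 2*al*(b-a) + 2*I" and IJ: "I = (al/n)*J"
  shows "n*a \<le> n*b + J"
proof -
  have "0 \<le> 2*al*((b-a) + (1/n)*J)" using po IJ by (simp add: algebra_simps)
  then have "0 \<le> (b-a) + (1/n)*J" using ap by (simp add: zero_le_mult_iff)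
  then have "0 \<le> n * ((b-a) + (1/n)*J)" using np by simp
  then show ?thesis using np by (simp add: algebra_simps)
qed

lemma grad_ineq:
  fixes f :: "'a::real_inner \<Rightarrow> real"
  assumes cf: "convex_on UNIV f" and d: "(f has_derivative (\<lambda>h. g \<bullet> h)) (at x)"
  shows "f y \<ge> f x + g \<bullet> (y - x)"
proof -
  define h where "h = y - x"
  define p where "p = (\<lambda>t::real. f (x + t *\<^sub>R h))"
  have cp: "convex_on UNIV p"
    unfolding convex_on_def p_def
  proof (intro conjI ballI allI impI)
    fix a b u v :: real assume uv: "u \<ge> 0" "v \<ge> 0" "u + v = 1"
    have "x + (u * a + v * b) *\<^sub>R h = u *\<^sub>R (x + a *\<^sub>R h) + v *\<^sub>R (x + b *\<^sub>R h)"
      using uv by (simp add: algebra_simps flip: scaleR_add_left)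
    then show "f (x + (u *\<^sub>R a + v *\<^sub>R b) *\<^sub>R h) \<le> u * f (x + a *\<^sub>R h) + v * f (x + b *\<^sub>R h)"
      using cf uv unfolding convex_on_def by simp
  qed simp
  have d1: "((\<lambda>t::real. x + t *\<^sub>R h) has_derivative (\<lambda>t. t *\<^sub>R h)) (at 0)"
    by (auto intro!: derivative_eq_intros)
  have d2: "(f has_derivative (\<lambda>h. g \<bullet> h)) (at (x + 0 *\<^sub>R h))" using d by simp
  have "((\<lambda>t. f (x + t *\<^sub>R h)) has_derivative (\<lambda>t. g \<bullet> (t *\<^sub>R h))) (at 0)"
    using has_derivative_compose[OF d1 d2] by (simp add: o_def)
  then have "(p has_field_derivative (g \<bullet> h)) (at 0)"
    unfolding p_def has_field_derivative_def
  proof -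
    assume a: "((\<lambda>t. f (x + t *\<^sub>R h)) has_derivative (\<lambda>t. g \<bullet> (t *\<^sub>R h))) (at 0)"
    have "(\<lambda>t. g \<bullet> (t *\<^sub>R h)) = (*) (g \<bullet> h)" by (auto simp: fun_eq_iff)
    with a show "((\<lambda>t. f (x + t *\<^sub>R h)) has_derivative (*) (g \<bullet> h)) (at 0)" by simp
  qed
  then have "p 1 - p 0 \<ge> (g \<bullet> h) * (1 - 0)"
    by (intro convex_on_imp_above_tangent[OF cp]) auto
  then show ?thesis by (simp add: p_def h_def)
qed


theorem lemma1:
  fixes \<alpha> L :: real
    and f :: "'n::finite \<Rightarrow> real^'d::finite \<Rightarrow> real"
    and g :: "'n \<Rightarrow> real^'d \<Rightarrow> real^'d"
    and r :: "real^'d \<Rightarrow> ereal"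
    and E :: "'n \<Rightarrow> 'n \<Rightarrow> bool"
    and W A B S :: "real^'n^'n"
    and xs ws us :: "real^'d^'n"
  assumes alpha_pos: "\<alpha> > 0"
    and L_pos: "L > 0"
    and f_grad: "\<And>i x. (f i has_derivative (\<lambda>h. g i x \<bullet> h)) (at x)"
    and f_convex: "\<And>i. convex_on UNIV (f i)"
    and f_smooth: "\<And>i x y. norm (g i x - g i y) \<le> L * norm (x - y)"
    and r_proper: "proper_fun r"
    and r_closed: "closed_fun r"
    and r_convex: "convex_fun r"
    and W_mix: "mixing_matrix E W"
    and A_poly: "poly_in A W"
    and B_poly: "poly_in B W"
    and A_sym: "transpose A = A"
    and A_one: "A *v ones = ones"
    and B_psd: "psd B"
    and B_null: "{v. B *v v = 0} = span {ones}"
    and AB: "psd (mat 1 - A ** A - B)"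
    and S_sqrt: "psd S" "S ** S = B"
    and fix_w: "ws = xs - \<alpha> *\<^sub>R gradF g xs"
    and fix_x: "xs = proxR \<alpha> r (kron_app A (ws - kron_app S us))"
    and fix_u: "0 = kron_app S (ws - kron_app S us)"
  shows "\<exists>x0. (\<forall>i. xs $ i = x0) \<and>
           (\<forall>y. ereal (1 / real CARD('n)) * (\<Sum>i\<in>UNIV. ereal (f i x0) + r x0)
                \<le> ereal (1 / real CARD('n)) * (\<Sum>i\<in>UNIV. ereal (f i y) + r y))"
  proof -
  define v where "v = ws - kron_app S us"
  have Sv: "kron_app S v = 0" using fix_u[symmetric] unfolding v_def .
  have kc: "kron_app M x $ i $ k = (\<Sum>j\<in>UNIV. M $ i $ j * x $ j $ k)" for M :: "real^'n^'n" and x :: "real^'d^'n" and i k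
    unfolding kron_app_def by simp
  have Bones: "B *v ones = 0"
  proof -
    have "ones \<in> span {ones}" by (simp add: span_base)
    then show ?thesis using B_null by blast
  qed
  have Sones: "S *v ones = 0"
  proof -
    have "S *v (S *v ones) = B *v ones" using S_sqrt(2) by (simp add: matrix_vector_mul_assoc)
    then have "ones \<bullet> (S *v (S *v ones)) = 0" using Bones by simp
    moreover have "ones \<bullet> (S *v (S *v ones)) = (S *v ones) \<bullet> (S *v ones)"
    proof -
      have "ones \<bullet> (S *v (S *v ones)) = (ones v* S) \<bullet> (S *v ones)" by (simp add: dot_lmul_matrix)
      also have "ones v* S = S *v ones"
      proof -
        have "transpose S *v ones = ones v* S" by (rule transpose_matrix_vector)
        then show ?thesis using S_sqrt(1) unfolding psd_def by simp
      qed
      finally show ?thesis .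
    qed
    ultimately show ?thesis by simp
  qed
  have colsum: "(\<Sum>i\<in>UNIV. S $ i $ j) = 0" for j
  proof -
    have "(ones v* S) $ j = 0"
    proof -
      have "transpose S *v ones = ones v* S" by (rule transpose_matrix_vector)
      then have "ones v* S = 0" using S_sqrt(1) Sones unfolding psd_def by simp
      then show ?thesis by simp
    qed
    then show ?thesis by (simp add: vector_matrix_mult_def ones_def)
  qed
  have vconst: "v $ i = v $ j" for i j
  proof -
    have "v $ i $ k = v $ j $ k" for k
    proof -
      define c where "c = (\<chi> i. v $ i $ k)"
      have "S *v c = 0"
      proof -
        have "(S *v c) $ i = 0" for i
          using arg_cong[OF Sv, of "\<lambda>x. x $ i $ k"] unfolding kc
          by (simp add: matrix_vector_mult_def c_def)
        then show ?thesis by (simp add: vec_eq_iff)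
      qed
      moreover have "B *v c = S *v (S *v c)" using S_sqrt(2) by (simp add: matrix_vector_mul_assoc)
      ultimately have "B *v c = 0" by simp
      then have "c \<in> span {ones}" using B_null by blast
      then obtain t where "c = t *\<^sub>R ones" by (auto simp: span_singleton)
      then have "c $ i = c $ j" by (simp add: ones_def)
      then show ?thesis by (simp add: c_def)
    qed
    then show ?thesis by (simp add: vec_eq_iff)
  qed
  obtain i0 :: 'n where True by blast
  define v0 where "v0 = v $ i0"
  have vc: "v $ i = v0" for i using vconst v0_def by simp
  have Av: "kron_app A v $ i = v0" for i
  proof -
    have "kron_app A v $ i = (\<Sum>j\<in>UNIV. A $ i $ j) *\<^sub>R v0"
      unfolding kron_app_def by (simp add: vc scaleR_sum_left)
    also have "(\<Sum>j\<in>UNIV. A $ i $ j) = (A *v ones) $ i" by (simp add: matrix_vector_mult_def ones_def)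
    also have "\<dots> = 1" using A_one by (simp add: ones_def)
    finally show ?thesis by simp
  qed
  define x0 where "x0 = prox \<alpha> r v0"
  have xs_i: "xs $ i = x0" for i
    using fix_x unfolding v_def[symmetric] proxR_def x0_def by (simp add: Av)
  define n where "n = real CARD('n)"
  have npos: "n > 0" unfolding n_def by simp
  define G where "G = (\<Sum>i\<in>UNIV. g i x0)"
  have sumS: "(\<Sum>i\<in>UNIV. kron_app S us $ i) = 0"
  proof -
    have "(\<Sum>i\<in>UNIV. kron_app S us $ i) = (\<Sum>i\<in>UNIV. \<Sum>j\<in>UNIV. S $ i $ j *\<^sub>R us $ j)"
      unfolding kron_app_def by simp
    also have "\<dots> = (\<Sum>j\<in>UNIV. \<Sum>i\<in>UNIV. S $ i $ j *\<^sub>R us $ j)" by (rule sum.swap)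
    also have "\<dots> = (\<Sum>j\<in>UNIV. (\<Sum>i\<in>UNIV. S $ i $ j) *\<^sub>R us $ j)" by (simp add: scaleR_sum_left)
    also have "\<dots> = 0" by (simp add: colsum)
    finally show ?thesis .
  qed
  have "(\<Sum>i\<in>UNIV. v $ i) = n *\<^sub>R v0" unfolding vc sum_constant_scaleR n_def by simp
  moreover have "(\<Sum>i\<in>UNIV. v $ i) = (\<Sum>i\<in>UNIV. ws $ i) - (\<Sum>i\<in>UNIV. kron_app S us $ i)"
    unfolding v_def by (simp add: sum_subtractf)
  moreover have "(\<Sum>i\<in>UNIV. ws $ i) = n *\<^sub>R x0 - \<alpha> *\<^sub>R G"
    unfolding fix_w G_def gradF_def by (simp add: xs_i sum_subtractf scaleR_sum_right n_def sum_constant_scaleR del: sum_constant)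
  ultimately have nv0: "n *\<^sub>R v0 = n *\<^sub>R x0 - \<alpha> *\<^sub>R G" using sumS by simp
  have v0x0: "v0 - x0 = - (\<alpha> / n) *\<^sub>R G"
  proof -
    have "n *\<^sub>R (v0 - x0) = - \<alpha> *\<^sub>R G" using nv0 by (simp add: algebra_simps)
    then have "(1/n) *\<^sub>R (n *\<^sub>R (v0 - x0)) = (1/n) *\<^sub>R (- \<alpha> *\<^sub>R G)" by simp
    then show ?thesis using npos by (simp add: divide_inverse mult.commute)
  qed
  have pmin: "\<forall>s. r x0 + ereal (norm (x0 - v0)^2 / (2 * \<alpha>)) \<le> r s + ereal (norm (s - v0)^2 / (2 * \<alpha>))"
    unfolding x0_def prox_def using theI'[OF prox_ex1[OF alpha_pos r_proper r_closed r_convex, of v0]] .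
  obtain x1 where x1: "r x1 \<noteq> \<infinity>" using r_proper unfolding proper_fun_def by auto
  have "r x0 \<noteq> \<infinity>"
  proof
    assume "r x0 = \<infinity>"
    then have "r x1 + ereal (norm (x1 - v0)^2 / (2 * \<alpha>)) = \<infinity>" using pmin[rule_format, of x1] by simp
    with x1 show False by simp
  qed
  moreover have "r x0 \<noteq> -\<infinity>" using r_proper unfolding proper_fun_def by auto
  ultimately obtain a where ra: "r x0 = ereal a" by (cases "r x0") auto
  show ?thesis
  proof (intro exI conjI allI)
    show "xs $ i = x0" for i by (rule xs_i)
    fix y
    show "ereal (1 / real CARD('n)) * (\<Sum>i\<in>UNIV. ereal (f i x0) + r x0)
          \<le> ereal (1 / real CARD('n)) * (\<Sum>i\<in>UNIV. ereal (f i y) + r y)"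
    proof (cases "r y")
      case PInf
      have "(\<Sum>i\<in>UNIV. ereal (f i y) + r y) = \<infinity>" using PInf by (simp add: sum_Pinfty)
      then show ?thesis by simp
    next
      case MInf then show ?thesis using r_proper unfolding proper_fun_def by auto
    next
      case (real b)
      have po: "0 \<le> 2 * \<alpha> * (b - a) + 2 * ((x0 - v0) \<bullet> (y - x0))"
        by (rule prox_opt[OF alpha_pos r_convex pmin ra real])
      have IJ: "(x0 - v0) \<bullet> (y - x0) = (\<alpha> / n) * (G \<bullet> (y - x0))"
      proof -
        have "x0 - v0 = - (v0 - x0)" by simp
        also have "\<dots> = (\<alpha> / n) *\<^sub>R G" unfolding v0x0 by simp
        finally show ?thesis by simp
      qed
      have rb: "n * a \<le> n * b + G \<bullet> (y - x0)" by (rule aux4[OF alpha_pos npos po IJ])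
      have fg: "f i x0 + g i x0 \<bullet> (y - x0) \<le> f i y" for i
        by (rule grad_ineq[OF f_convex f_grad])
      have "(\<Sum>i\<in>UNIV. f i x0) + G \<bullet> (y - x0) \<le> (\<Sum>i\<in>UNIV. f i y)"
        unfolding G_def inner_sum_left sum.distrib[symmetric] by (intro sum_mono fg)
      with rb have main: "(\<Sum>i\<in>UNIV. f i x0) + n * a \<le> (\<Sum>i\<in>UNIV. f i y) + n * b" by simp
      have "(\<Sum>i\<in>UNIV. ereal (f i x0) + r x0) = ereal ((\<Sum>i\<in>UNIV. f i x0) + n * a)"
        using ra by (simp add: sum.distrib n_def)
      moreover have "(\<Sum>i\<in>UNIV. ereal (f i y) + r y) = ereal ((\<Sum>i\<in>UNIV. f i y) + n * b)"
        using real by (simp add: sum.distrib n_def)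
      ultimately show ?thesis using main npos unfolding n_def[symmetric]
        by (simp add: divide_right_mono)
    qed
  qed
qed

end
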